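(* Let $E$ and $F$ be complex Banach spaces, let $A_m:\mathrm{dom}(A_m)\subseteq E\to E$ and $B:\mathrm{dom}(B)\subseteq F\to F$ be linear operators, and let $L:\mathrm{dom}(A_m)\to F$ be linear, surjective and bounded with respect to the graph norm of $A_m$. Assume that the restriction $A_0$ of $A_m$ to $\ker(L)$ generates a bounded analytic semigroup $(T_0(t))_{t\ge0}$ on $E$, that $B$ generates a strongly continuous semigroup $(S(t))_{t\ge0}$ on $F$, that $x\mapsto(A_mx,Lx)$, $\mathrm{dom}(A_m)\to E\times F$, is closed, and that $A_0$ and $B$ are boundedly invertible. Let $D_0:=(L|_{\ker(A_m)})^{-1}:F\to E$. Assume moreover that for $y\in\mathrm{dom}(B)$ and $t\ge0$ the operators $Q(t)y=D_0S(t)y-T_0(t)D_0y-\int_0^tT_0(t-s)D_0S(s)By\,\mathrm{d}s$ extend to bounded operators $F\to E$ with $\limsup_{t\downarrow0}\|Q(t)\|<\infty$. Then for every $t_{\max}>0$ there is $C\ge0$ such that for every $h\in[0,t_{\max}]$, every $s_0,s_1\in[0,h]$ and every $y\in\mathrm{dom}(B^2)$, \[ \Bigl\|\int_0^hT_0(h-s)A_0^{-1}D_0S(s)By\,\mathrm{d}s-hT_0(h-s_0)A_0^{-1}D_0S(s_1)By\Bigr\|\le Ch^2\bigl(\|By\|+\|B^2y\|\bigr). \]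
   Context: Under the stated assumptions $L|_{\ker(A_m)}$ is bijective onto $F$ and $D_0$ is a bounded operator $F\to E$. *)

theory Defs
  imports "HOL-Analysis.Analysis"
begin

text \<open>HOL-Analysis has no complex vector space class; a complex Banach space is a real
Banach space with a compatible complex scalar multiplication and absolutely homogeneous norm.\<close>

class complex_banach = banach +
  fixes scaleC :: "complex \<Rightarrow> 'a \<Rightarrow> 'a" (infixr \<open>*\<^sub>C\<close> 75)
  assumes scaleC_of_real: "complex_of_real r *\<^sub>C x = r *\<^sub>R x"
    and scaleC_add_right: "a *\<^sub>C (x + y) = a *\<^sub>C x + a *\<^sub>C y"
    and scaleC_add_left: "(a + b) *\<^sub>C x = a *\<^sub>C x + b *\<^sub>C x"
    and scaleC_scaleC: "a *\<^sub>C (b *\<^sub>C x) = (a * b) *\<^sub>C x"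
    and scaleC_one: "1 *\<^sub>C x = x"
    and norm_scaleC: "norm (a *\<^sub>C x) = cmod a * norm x"

definition csubspace :: "'a::complex_banach set \<Rightarrow> bool" where
  "csubspace D \<longleftrightarrow> 0 \<in> D \<and> (\<forall>x\<in>D. \<forall>y\<in>D. x + y \<in> D) \<and> (\<forall>c. \<forall>x\<in>D. c *\<^sub>C x \<in> D)"

definition clinear_on :: "'a::complex_banach set \<Rightarrow> ('a \<Rightarrow> 'b::complex_banach) \<Rightarrow> bool" where
  "clinear_on D f \<longleftrightarrow> csubspace D \<and> (\<forall>x\<in>D. \<forall>y\<in>D. f (x + y) = f x + f y)
      \<and> (\<forall>c. \<forall>x\<in>D. f (c *\<^sub>C x) = c *\<^sub>C f x)"

definition bounded_clinear :: "('a::complex_banach \<Rightarrow> 'b::complex_banach) \<Rightarrow> bool" where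
  "bounded_clinear f \<longleftrightarrow> bounded_linear f \<and> (\<forall>c x. f (c *\<^sub>C x) = c *\<^sub>C f x)"

definition C0_semigroup :: "(real \<Rightarrow> 'a::complex_banach \<Rightarrow> 'a) \<Rightarrow> bool" where
  "C0_semigroup T \<longleftrightarrow> (\<forall>t\<ge>0. bounded_clinear (T t)) \<and> T 0 = id
     \<and> (\<forall>t\<ge>0. \<forall>s\<ge>0. T (t + s) = T t \<circ> T s)
     \<and> (\<forall>x. continuous_on {0..} (\<lambda>t. T t x))"

definition generates :: "('a::complex_banach \<Rightarrow> 'a) \<Rightarrow> 'a set \<Rightarrow> (real \<Rightarrow> 'a \<Rightarrow> 'a) \<Rightarrow> bool" where
  "generates A D T \<longleftrightarrow> C0_semigroup T
     \<and> D = {x. \<exists>y. ((\<lambda>h. (1 / h) *\<^sub>R (T h x - x)) \<longlongrightarrow> y) (at_right 0)}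
     \<and> (\<forall>x\<in>D. ((\<lambda>h. (1 / h) *\<^sub>R (T h x - x)) \<longlongrightarrow> A x) (at_right 0))"

definition sector :: "real \<Rightarrow> complex set" where
  "sector \<delta> = {z. z \<noteq> 0 \<and> \<bar>Arg z\<bar> < \<delta>}"

definition op_holomorphic_on :: "(complex \<Rightarrow> 'a::complex_banach \<Rightarrow> 'a) \<Rightarrow> complex set \<Rightarrow> bool" where
  "op_holomorphic_on T U \<longleftrightarrow> (\<forall>z\<in>U. \<exists>T'. bounded_clinear T' \<and>
     ((\<lambda>w. onorm (\<lambda>x. inverse (w - z) *\<^sub>C (T w x - T z x) - T' x)) \<longlongrightarrow> 0) (at z))"

definition bounded_analytic_semigroup :: "(real \<Rightarrow> 'a::complex_banach \<Rightarrow> 'a) \<Rightarrow> bool" where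
  "bounded_analytic_semigroup T \<longleftrightarrow> C0_semigroup T \<and>
     (\<exists>\<delta>\<in>{0<..pi/2}. \<exists>TT.
        (\<forall>t>0. TT (complex_of_real t) = T t)
      \<and> (\<forall>z\<in>sector \<delta>. bounded_clinear (TT z))
      \<and> (\<forall>z1\<in>sector \<delta>. \<forall>z2\<in>sector \<delta>. TT (z1 + z2) = TT z1 \<circ> TT z2)
      \<and> op_holomorphic_on TT (sector \<delta>)
      \<and> (\<forall>\<delta>'\<in>{0<..<\<delta>}. (\<forall>x. ((\<lambda>z. TT z x) \<longlongrightarrow> x) (at 0 within sector \<delta>'))
                        \<and> bounded ((\<lambda>z. onorm (TT z)) ` sector \<delta>')))"

end

theory Submission
  imports Defs
begin

lemma baire_ball:
  fixes F :: "nat \<Rightarrow> 'a::banach set"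
  assumes cl: "\<And>n. closed (F n)" and un: "\<And>x. \<exists>n. x \<in> F n"
  shows "\<exists>n x r. r > 0 \<and> ball x r \<subseteq> F n"
proof (rule ccontr)
  assume H: "\<not> ?thesis"
  have "euclidean interior_of \<Union>(range F) = {}"
  proof (rule Baire_category_alt)
    show "completely_metrizable_space (euclidean::'a topology) \<or> locally_compact_space (euclidean::'a topology) \<and> regular_space (euclidean::'a topology)"
      using completely_metrizable_space_euclidean by blast
    show "countable (range F)" by simp
    fix T assume "T \<in> range F"
    then obtain n where T: "T = F n" by auto
    have "interior (F n) = {}"
    proof (rule ccontr)
      assume "interior (F n) \<noteq> {}"
      then obtain x where "x \<in> interior (F n)" by auto
      then obtain r where "r > 0" "ball x r \<subseteq> F n"
        by (meson mem_interior)
      with H show False by blast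
    qed
    then show "closedin euclidean T \<and> euclidean interior_of T = {}"
      using cl T by simp
  qed
  moreover have "\<Union>(range F) = UNIV" using un by auto
  ultimately show False by simp
qed


lemma unif_bdd:
  fixes T :: "'i \<Rightarrow> 'a::banach \<Rightarrow> 'b::real_normed_vector"
  assumes bl: "\<And>i. i \<in> I \<Longrightarrow> bounded_linear (T i)"
    and pw: "\<And>x. \<exists>c. \<forall>i\<in>I. norm (T i x) \<le> c"
  shows "\<exists>M>0. \<forall>i\<in>I. \<forall>x. norm (T i x) \<le> M * norm x"
proof -
  define F where "F n = {x. \<forall>i\<in>I. norm (T i x) \<le> real n}" for n
  have cl: "closed (F n)" for n
  proof -
    have "F n = (\<Inter>i\<in>I. {x. norm (T i x) \<le> real n})" by (auto simp: F_def)
    moreover have "closed {x. norm (T i x) \<le> real n}" if "i \<in> I" for i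
      using bl[OF that] by (intro closed_Collect_le continuous_intros) (auto intro: linear_continuous_on)
    ultimately show ?thesis by auto
  qed
  have un: "\<exists>n. x \<in> F n" for x
  proof -
    obtain c where c: "\<forall>i\<in>I. norm (T i x) \<le> c" using pw by blast
    obtain n where "c \<le> real n" using real_arch_simple by blast
    with c show ?thesis by (auto simp: F_def intro: order_trans)
  qed
  obtain n x0 r where r: "r > 0" and b: "ball x0 r \<subseteq> F n"
    using baire_ball[OF cl un] by blast
  have small: "norm (T i v) \<le> 2 * real n" if "i \<in> I" "norm v < r" for i v
  proof -
    have "x0 + v \<in> F n" "x0 \<in> F n" using b that r by (auto simp: dist_norm)
    then have "norm (T i (x0 + v)) \<le> n" "norm (T i x0) \<le> n" using that by (auto simp: F_def)
    moreover have "T i v = T i (x0 + v) - T i x0"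
      using bl[OF that(1)] by (simp add: linear_simps)
    ultimately show ?thesis by (metis norm_triangle_ineq4 order_trans add_mono mult_2)
  qed
  define M where "M = 4 * real n / r + 1"
  have "4 * real n / r \<ge> 0" using r by simp
  then have "M > 0" unfolding M_def by linarith
  moreover have "norm (T i x) \<le> M * norm x" if "i \<in> I" for i x
  proof (cases "x = 0")
    case True then show ?thesis using bl[OF that] by (simp add: linear_simps)
  next
    case False
    define c where "c = r / (2 * norm x)"
    have c: "c > 0" using False r by (simp add: c_def)
    have "norm (c *\<^sub>R x) < r" using False r by (simp add: c_def)
    then have "norm (T i (c *\<^sub>R x)) \<le> 2 * real n" using small that by blast
    then have "c * norm (T i x) \<le> 2 * real n"
      using bl[OF that] c by (simp add: linear_simps)
    then have "norm (T i x) \<le> 2 * real n / c" using c by (simp add: field_simps)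
    also have "\<dots> = 4 * real n / r * norm x" using False r by (simp add: c_def field_simps)
    also have "\<dots> \<le> M * norm x" by (simp add: M_def algebra_simps)
    finally show ?thesis .
  qed
  ultimately show ?thesis by blast
qed


lemma closed_graph:
  fixes D :: "'a::banach \<Rightarrow> 'b::banach"
  assumes lin: "linear D"
    and cg: "\<And>xs x y. xs \<longlonglongrightarrow> x \<Longrightarrow> (\<lambda>n. D (xs n)) \<longlonglongrightarrow> y \<Longrightarrow> D x = y"
  shows "bounded_linear D"
proof -
  define g where "g x = norm x + norm (D x)" for x
  have g_diff: "g (a - b) \<le> g a + g b" for a b
  proof -
    have "D (a - b) = D a - D b" by (rule linear_diff[OF lin])
    have "norm (D (a - b)) \<le> norm (D a) + norm (D b)" unfolding \<open>D (a - b) = D a - D b\<close> by (rule norm_triangle_ineq4)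
    then show ?thesis using norm_triangle_ineq4[of a b] unfolding g_def by linarith
  qed
  have g_scale: "g (c *\<^sub>R x) = \<bar>c\<bar> * g x" for c x
  proof -
    have "D (c *\<^sub>R x) = c *\<^sub>R D x" by (rule linear_scale[OF lin])
    then show ?thesis unfolding g_def by (simp add: distrib_left)
  qed
  have g0: "g 0 = 0" using lin by (simp add: g_def linear_0)
  define F where "F n = closure {x. g x \<le> real n}" for n
  have cl: "closed (F n)" for n by (simp add: F_def)
  have un: "\<exists>n. x \<in> F n" for x
  proof -
    obtain n where "g x \<le> real n" using real_arch_simple by blast
    then have "x \<in> {x. g x \<le> real n}" by simp
    then have "x \<in> F n" unfolding F_def by (rule closure_subset[THEN subsetD])
    then show ?thesis by blast
  qed
  obtain n x0 r where r: "r > 0" and b: "ball x0 r \<subseteq> F n"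
    using baire_ball[OF cl un] by blast
  have step1: "\<exists>a. g a \<le> 2 * real n \<and> norm (a - v) < e" if "norm v < r" "e > 0" for v e
  proof -
    have "x0 + v \<in> F n" "x0 \<in> F n" using b that r by (auto simp: dist_norm)
    then have A1: "\<forall>e>0. \<exists>y\<in>{x. g x \<le> real n}. dist y (x0 + v) < e"
      and A2: "\<forall>e>0. \<exists>y\<in>{x. g x \<le> real n}. dist y x0 < e"
      unfolding F_def closure_approachable by simp_all
    have e2: "e/2 > 0" using \<open>e > 0\<close> by simp
    obtain a1 where a1: "g a1 \<le> n" "dist a1 (x0 + v) < e/2" using A1[rule_format, OF e2] by auto
    obtain a2 where a2: "g a2 \<le> n" "dist a2 x0 < e/2" using A2[rule_format, OF e2] by auto
    have "g (a1 - a2) \<le> 2 * real n" using g_diff[of a1 a2] a1 a2 by linarith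
    moreover have "norm ((a1 - a2) - v) < e"
    proof -
      have "(a1 - a2) - v = (a1 - (x0 + v)) - (a2 - x0)" by (simp add: algebra_simps)
      then have "norm ((a1 - a2) - v) \<le> norm (a1 - (x0 + v)) + norm (a2 - x0)"
        by (simp only: norm_triangle_ineq4)
      then show ?thesis using a1 a2 by (simp add: dist_norm)
    qed
    ultimately show ?thesis by blast
  qed
  define M where "M = 4 * real n / r"
  have M0: "M \<ge> 0" using r by (simp add: M_def)
  have step2: "\<exists>a. g a \<le> M * norm v \<and> norm (a - v) < e" if "e > 0" for v e
  proof (cases "v = 0")
    case True then show ?thesis using g0 that by (intro exI[of _ 0]) simp
  next
    case False
    define c where "c = r / (2 * norm v)"
    have c: "c > 0" using False r by (simp add: c_def)
    have "norm (c *\<^sub>R v) < r" using False r by (simp add: c_def)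
    then obtain a' where a': "g a' \<le> 2 * real n" "norm (a' - c *\<^sub>R v) < e * c"
      using step1[OF _ mult_pos_pos[OF \<open>e > 0\<close> c]] by blast
    have "g ((1/c) *\<^sub>R a') = (1/c) * g a'" using c by (simp add: g_scale)
    also have "\<dots> \<le> (1/c) * (2 * real n)" using a' c by (simp add: divide_right_mono)
    also have "\<dots> = M * norm v" using False r by (simp add: c_def M_def field_simps)
    finally have "g ((1/c) *\<^sub>R a') \<le> M * norm v" .
    moreover have "norm ((1/c) *\<^sub>R a' - v) < e"
    proof -
      have "(1/c) *\<^sub>R a' - v = (1/c) *\<^sub>R (a' - c *\<^sub>R v)" using c by (simp add: algebra_simps)
      then have "norm ((1/c) *\<^sub>R a' - v) = (1/c) * norm (a' - c *\<^sub>R v)" using c by simp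
      also have "\<dots> < (1/c) * (e * c)" using a' c by (intro mult_strict_left_mono) auto
      also have "\<dots> = e" using c by simp
      finally show ?thesis .
    qed
    ultimately show ?thesis by blast
  qed
  have "\<forall>p. \<exists>a. 0 < snd p \<longrightarrow> g a \<le> M * norm (fst p) \<and> norm (a - fst p) < snd p"
    using step2 by blast
  from choice[OF this] obtain pk where
    pk: "\<forall>p. 0 < snd p \<longrightarrow> g (pk p) \<le> M * norm (fst p) \<and> norm (pk p - fst p) < snd p" by blast
  define pick where "pick v e = pk (v, e)" for v e
  have pick: "g (pick v e) \<le> M * norm v \<and> norm (pick v e - v) < e" if "e > 0" for v e
    using pk that unfolding pick_def by auto
  have bound: "norm (D v) \<le> norm v * (2 * M)" for v
  proof (cases "v = 0")
    case True then show ?thesis using lin by (simp add: linear_0)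
  next
    case False
    define vs where "vs = rec_nat v (\<lambda>k w. w - pick w (norm v / 2 ^ Suc k))"
    define a where "a k = pick (vs k) (norm v / 2 ^ Suc k)" for k
    have vs0: "vs 0 = v" by (simp add: vs_def)
    have vsS: "vs (Suc k) = vs k - a k" for k by (simp add: vs_def a_def)
    have ep: "norm v / 2 ^ Suc k > 0" for k using False by simp
    have bvs: "norm (vs k) \<le> norm v / 2 ^ k" for k
    proof (induction k)
      case 0 then show ?case by (simp add: vs0)
    next
      case (Suc k)
      have "norm (vs (Suc k)) = norm (a k - vs k)" by (simp add: vsS norm_minus_commute)
      also have "\<dots> < norm v / 2 ^ Suc k" using pick[OF ep[of k]] by (simp add: a_def)
      finally show ?case by simp
    qed
    have ga: "g (a k) \<le> M * norm v * (1/2) ^ k" for k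
    proof -
      have "g (a k) \<le> M * norm (vs k)" using pick[OF ep[of k]] by (simp add: a_def)
      also have "\<dots> \<le> M * (norm v / 2 ^ k)" by (rule mult_left_mono[OF bvs M0])
      finally show ?thesis by (simp add: power_one_over field_simps)
    qed
    have na: "norm (a k) \<le> M * norm v * (1/2) ^ k" "norm (D (a k)) \<le> M * norm v * (1/2) ^ k" for k
      using ga[of k] norm_ge_zero[of "a k"] norm_ge_zero[of "D (a k)"] unfolding g_def by linarith+
    have sg: "summable (\<lambda>k. M * norm v * (1/2::real) ^ k)"
      by (intro summable_mult summable_geometric) simp
    have sD: "summable (\<lambda>k. norm (D (a k)))"
      by (rule summable_comparison_test[OF _ sg]) (use na in auto)
    have ps: "(\<Sum>k<m. a k) = v - vs m" for m
      by (induction m) (simp_all add: vs0 vsS)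
    have "vs \<longlonglongrightarrow> 0"
    proof (rule Lim_null_comparison)
      show "\<forall>\<^sub>F k in sequentially. norm (vs k) \<le> norm v * (1/2) ^ k"
        using bvs by (simp add: power_one_over field_simps)
      show "(\<lambda>k. norm v * (1/2::real) ^ k) \<longlonglongrightarrow> 0"
        by (intro tendsto_mult_right_zero LIMSEQ_power_zero) simp
    qed
    then have "(\<lambda>m. v - vs m) \<longlonglongrightarrow> v - 0" by (intro tendsto_diff) auto
    then have t1: "(\<lambda>m. \<Sum>k<m. a k) \<longlonglongrightarrow> v" by (simp add: ps)
    have "(\<lambda>m. \<Sum>k<m. D (a k)) \<longlonglongrightarrow> (\<Sum>k. D (a k))"
      using summable_LIMSEQ summable_norm_cancel[OF sD] by blast
    then have "(\<lambda>m. D (\<Sum>k<m. a k)) \<longlonglongrightarrow> (\<Sum>k. D (a k))" using lin by (simp add: linear_sum)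
    from cg[OF t1 this] have Dv: "D v = (\<Sum>k. D (a k))" .
    have "norm (\<Sum>k. D (a k)) \<le> (\<Sum>k. norm (D (a k)))" by (rule summable_norm[OF sD])
    also have "\<dots> \<le> (\<Sum>k. M * norm v * (1/2::real) ^ k)"
      by (rule suminf_le[OF _ sD sg]) (use na in auto)
    also have "\<dots> = M * norm v * 2" by (simp add: suminf_mult suminf_geometric)
    finally show ?thesis by (simp add: Dv algebra_simps)
  qed
  show ?thesis
    by (rule bounded_linear_intro[where K = "2 * M"]) (use lin bound in \<open>auto simp: linear_add linear_scale\<close>)
qed


lemma bclin_bl: "bounded_clinear f \<Longrightarrow> bounded_linear f"
  by (simp add: bounded_clinear_def)

lemma sg_bound:
  fixes T :: "real \<Rightarrow> 'a::complex_banach \<Rightarrow> 'a"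
  assumes C0: "C0_semigroup T"
  shows "\<exists>M>0. \<forall>t\<in>{0..a}. \<forall>x. norm (T t x) \<le> M * norm x"
proof -
  have bl: "bounded_linear (T t)" if "t \<in> {0..a}" for t
    using C0 that unfolding C0_semigroup_def by (auto intro: bclin_bl)
  have pw: "\<exists>c. \<forall>t\<in>{0..a}. norm (T t x) \<le> c" for x
  proof -
    have "continuous_on {0..} (\<lambda>t. T t x)" using C0 unfolding C0_semigroup_def by blast
    then have "continuous_on {0..a} (\<lambda>t. T t x)" by (rule continuous_on_subset) auto
    then have "compact ((\<lambda>t. T t x) ` {0..a})" by (intro compact_continuous_image) auto
    then have "bounded ((\<lambda>t. T t x) ` {0..a})" by (rule compact_imp_bounded)
    then show ?thesis unfolding bounded_iff by auto
  qed
  show ?thesis using unif_bdd[of "{0..a}" T, OF bl pw] by blast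
qed

lemma gen_deriv:
  fixes T :: "real \<Rightarrow> 'a::complex_banach \<Rightarrow> 'a"
  assumes gen: "generates A D T"
    and M: "\<And>t x. t \<in> {0..a} \<Longrightarrow> norm (T t x) \<le> M * norm x" and M0: "M \<ge> 0"
    and x: "x \<in> D" and t: "t \<in> {0..a}"
  shows "((\<lambda>s. T s x) has_derivative (\<lambda>h. h *\<^sub>R T t (A x))) (at t within {0..a})"
proof -
  have C0: "C0_semigroup T" and lim: "((\<lambda>h. (1 / h) *\<^sub>R (T h x - x)) \<longlongrightarrow> A x) (at_right 0)"
    using gen x unfolding generates_def by auto
  have bl: "bounded_linear (T s)" if "s \<ge> 0" for s
    using C0 that unfolding C0_semigroup_def by (auto intro: bclin_bl)
  have sgp: "T (s + u) = T s \<circ> T u" if "s \<ge> 0" "u \<ge> 0" for s u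
    using C0 that unfolding C0_semigroup_def by blast
  have cont: "continuous_on {0..} (\<lambda>s. T s (A x))" using C0 unfolding C0_semigroup_def by blast
  show ?thesis unfolding has_derivative_within_alt
  proof (intro conjI allI impI)
    show "bounded_linear (\<lambda>h. h *\<^sub>R T t (A x))" by (rule bounded_linear_scaleR_left)
    fix e :: real assume e: "e > 0"
    define e1 where "e1 = e / (2 * (M + 1))"
    have e1: "e1 > 0" using e M0 by (simp add: e1_def)
    have Me1: "M * e1 \<le> e / 2"
    proof -
      have "M * e1 = (e/2) * (M / (M + 1))" using M0 by (simp add: e1_def field_simps)
      also have "\<dots> \<le> (e/2) * 1" using M0 e by (intro mult_left_mono) auto
      finally show ?thesis by simp
    qed
    have "\<forall>\<^sub>F h in at_right 0. dist ((1 / h) *\<^sub>R (T h x - x)) (A x) < e1"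
      using tendstoD[OF lim e1] .
    then obtain b where b: "b > 0" and bb: "\<And>h. h > 0 \<Longrightarrow> h < b \<Longrightarrow> dist ((1 / h) *\<^sub>R (T h x - x)) (A x) < e1"
      unfolding eventually_at_right_field by auto
    have rem: "norm (T h x - x - h *\<^sub>R A x) \<le> e1 * h" if "h > 0" "h < b" for h
    proof -
      have "T h x - x - h *\<^sub>R A x = h *\<^sub>R ((1 / h) *\<^sub>R (T h x - x) - A x)"
        using that by (simp add: algebra_simps)
      then have "norm (T h x - x - h *\<^sub>R A x) = h * dist ((1 / h) *\<^sub>R (T h x - x)) (A x)"
        using that by (simp add: dist_norm)
      also have "\<dots> \<le> h * e1" using bb[OF that] that by (intro mult_left_mono) auto
      finally show ?thesis by (simp add: mult.commute)
    qed
    have "t \<in> {0..}" using t by simp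
    then obtain d2 where d2: "d2 > 0" and dd2: "\<And>y. y \<in> {0..} \<Longrightarrow> dist y t < d2 \<Longrightarrow> dist (T y (A x)) (T t (A x)) < e/2"
      using cont e unfolding continuous_on_iff by (metis half_gt_zero)
    show "\<exists>d>0. \<forall>y\<in>{0..a}. norm (y - t) < d \<longrightarrow> norm (T y x - T t x - (y - t) *\<^sub>R T t (A x)) \<le> e * norm (y - t)"
    proof (intro exI[of _ "min b d2"] conjI ballI impI)
      show "min b d2 > 0" using b d2 by simp
      fix y assume y: "y \<in> {0..a}" and yd: "norm (y - t) < min b d2"
      consider "y > t" | "y = t" | "y < t" by linarith
      then show "norm (T y x - T t x - (y - t) *\<^sub>R T t (A x)) \<le> e * norm (y - t)"
      proof cases
        case 1
        define h where "h = y - t"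
        have h: "h > 0" "h < b" using 1 yd by (auto simp: h_def)
        have "T y = T t \<circ> T h" using sgp[of t h] t h by (simp add: h_def)
        then have "T y x - T t x - (y - t) *\<^sub>R T t (A x) = T t (T h x - x - h *\<^sub>R A x)"
          using bl[of t] t by (simp add: h_def linear_simps)
        then have "norm (T y x - T t x - (y - t) *\<^sub>R T t (A x)) \<le> M * norm (T h x - x - h *\<^sub>R A x)"
          using M[OF t] by simp
        also have "\<dots> \<le> M * (e1 * h)" using rem[OF h] M0 by (rule mult_left_mono)
        also have "\<dots> = (M * e1) * h" by simp
        also have "\<dots> \<le> (e/2) * h" using Me1 h by (intro mult_right_mono) auto
        also have "\<dots> \<le> e * norm (y - t)" using h e by (simp add: h_def)
        finally show ?thesis .
      next
        case 2 then show ?thesis by simp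
      next
        case 3
        define k where "k = t - y"
        have k: "k > 0" "k < b" using 3 yd by (auto simp: k_def)
        have y0: "y \<ge> 0" using y by simp
        have "T t = T y \<circ> T k" using sgp[of y k] y0 k by (simp add: k_def)
        then have eq: "T y x - T t x - (y - t) *\<^sub>R T t (A x)
            = - T y (T k x - x - k *\<^sub>R A x) + k *\<^sub>R (T t (A x) - T y (A x))"
          using bl[OF y0] by (simp add: k_def linear_simps algebra_simps)
        have n1: "norm (T y (T k x - x - k *\<^sub>R A x)) \<le> (e/2) * k"
        proof -
          have "norm (T y (T k x - x - k *\<^sub>R A x)) \<le> M * norm (T k x - x - k *\<^sub>R A x)"
            using M[OF y] by simp
          also have "\<dots> \<le> M * (e1 * k)" using rem[OF k] M0 by (rule mult_left_mono)
          also have "\<dots> = (M * e1) * k" by simp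
          also have "\<dots> \<le> (e/2) * k" using Me1 k by (intro mult_right_mono) auto
          finally show ?thesis .
        qed
        have n2: "norm (k *\<^sub>R (T t (A x) - T y (A x))) \<le> (e/2) * k"
        proof -
          have "dist y t < d2" using yd by (simp add: dist_norm)
          then have "dist (T y (A x)) (T t (A x)) < e/2" using dd2 y0 by simp
          then have "norm (T t (A x) - T y (A x)) \<le> e/2" by (simp add: dist_norm norm_minus_commute)
          then show ?thesis using k by (simp add: mult.commute mult_left_mono)
        qed
        have "norm (T y x - T t x - (y - t) *\<^sub>R T t (A x)) \<le> norm (T y (T k x - x - k *\<^sub>R A x)) + norm (k *\<^sub>R (T t (A x) - T y (A x)))"
          unfolding eq by (metis norm_minus_cancel norm_triangle_ineq)
        also have "\<dots> \<le> e * k" using n1 n2 by simp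
        also have "\<dots> = e * norm (y - t)" using k by (simp add: k_def)
        finally show ?thesis .
      qed
    qed
  qed
qed

lemma gen_lip:
  fixes T :: "real \<Rightarrow> 'a::complex_banach \<Rightarrow> 'a"
  assumes gen: "generates A D T"
    and M: "\<And>t x. t \<in> {0..a} \<Longrightarrow> norm (T t x) \<le> M * norm x" and M0: "M \<ge> 0"
    and x: "x \<in> D" and s: "s \<in> {0..a}" and s': "s' \<in> {0..a}"
  shows "norm (T s x - T s' x) \<le> M * norm (A x) * \<bar>s - s'\<bar>"
proof -
  have "norm (T s x - T s' x) \<le> (M * norm (A x)) * norm (s - s')"
  proof (rule differentiable_bound[where f' = "\<lambda>t h. h *\<^sub>R T t (A x)"])
    show "convex {0..a}" by simp
    show "((\<lambda>s. T s x) has_derivative (\<lambda>h. h *\<^sub>R T t (A x))) (at t within {0..a})" if "t \<in> {0..a}" for t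
      by (rule gen_deriv[OF gen M M0 x that])
    show "onorm (\<lambda>h. h *\<^sub>R T t (A x)) \<le> M * norm (A x)" if "t \<in> {0..a}" for t
    proof (rule onorm_le)
      fix h :: real
      have "norm (h *\<^sub>R T t (A x)) = \<bar>h\<bar> * norm (T t (A x))" by simp
      also have "\<dots> \<le> \<bar>h\<bar> * (M * norm (A x))" using M[OF that] by (intro mult_left_mono) auto
      finally show "norm (h *\<^sub>R T t (A x)) \<le> M * norm (A x) * norm h" by (simp add: mult.commute)
    qed
  qed (use s s' in auto)
  then show ?thesis by simp
qed


lemma sg_cont_comp:
  fixes T :: "real \<Rightarrow> 'a::complex_banach \<Rightarrow> 'a"
  assumes C0: "C0_semigroup T"
    and M: "\<And>t x. t \<in> {0..h} \<Longrightarrow> norm (T t x) \<le> M * norm x"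
    and g: "continuous_on {0..h} g"
  shows "continuous_on {0..h} (\<lambda>s. T (h - s) (g s))"
  unfolding continuous_on_def
proof
  fix s0 assume s0: "s0 \<in> {0..h}"
  have bl: "bounded_linear (T t)" if "t \<ge> 0" for t
    using C0 that unfolding C0_semigroup_def by (auto intro: bclin_bl)
  have "continuous_on {0..} (\<lambda>t. T t (g s0))" using C0 unfolding C0_semigroup_def by blast
  then have "continuous_on {0..h} (\<lambda>s. T (h - s) (g s0))"
    by (rule continuous_on_compose2[where f = "\<lambda>s. h - s"]) (auto intro!: continuous_intros)
  then have tB: "((\<lambda>s. T (h - s) (g s0)) \<longlongrightarrow> T (h - s0) (g s0)) (at s0 within {0..h})"
    using s0 unfolding continuous_on_def by blast
  have "((\<lambda>s. g s - g s0) \<longlongrightarrow> g s0 - g s0) (at s0 within {0..h})"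
    using g s0 unfolding continuous_on_def by (intro tendsto_diff) auto
  then have "((\<lambda>s. norm (g s - g s0)) \<longlongrightarrow> 0) (at s0 within {0..h})"
    using tendsto_norm_zero by force
  then have "((\<lambda>s. M * norm (g s - g s0)) \<longlongrightarrow> M * 0) (at s0 within {0..h})"
    by (intro tendsto_mult tendsto_const)
  then have z: "((\<lambda>s. M * norm (g s - g s0)) \<longlongrightarrow> 0) (at s0 within {0..h})" by simp
  have tA: "((\<lambda>s. T (h - s) (g s - g s0)) \<longlongrightarrow> 0) (at s0 within {0..h})"
  proof (rule Lim_null_comparison[OF _ z])
    show "\<forall>\<^sub>F s in at s0 within {0..h}. norm (T (h - s) (g s - g s0)) \<le> M * norm (g s - g s0)"
      unfolding eventually_at_filter by (rule always_eventually) (auto intro: M)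
  qed
  have "((\<lambda>s. T (h - s) (g s - g s0) + T (h - s) (g s0)) \<longlongrightarrow> 0 + T (h - s0) (g s0)) (at s0 within {0..h})"
    by (rule tendsto_add[OF tA tB])
  moreover have "\<forall>\<^sub>F s in at s0 within {0..h}. T (h - s) (g s - g s0) + T (h - s) (g s0) = T (h - s) (g s)"
    unfolding eventually_at_filter
    by (rule always_eventually) (auto simp: linear_simps bl)
  ultimately show "((\<lambda>s. T (h - s) (g s)) \<longlongrightarrow> T (h - s0) (g s0)) (at s0 within {0..h})"
    using tendsto_cong by force
qed

lemma clin_scale:
  assumes "clinear_on Dm f" "x \<in> Dm"
  shows "r *\<^sub>R x \<in> Dm \<and> f (r *\<^sub>R x) = r *\<^sub>R f x"
  using assms unfolding clinear_on_def csubspace_def by (metis scaleC_of_real)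

lemma clin_add:
  assumes "clinear_on Dm f" "x \<in> Dm" "y \<in> Dm"
  shows "x + y \<in> Dm \<and> f (x + y) = f x + f y"
  using assms unfolding clinear_on_def csubspace_def by blast

lemma clin_diff:
  assumes "clinear_on Dm f" "x \<in> Dm" "y \<in> Dm"
  shows "x - y \<in> Dm \<and> f (x - y) = f x - f y"
proof -
  have "x - y = x + (-1) *\<^sub>R y" by simp
  moreover have "(-1) *\<^sub>R y \<in> Dm \<and> f ((-1) *\<^sub>R y) = (-1) *\<^sub>R f y" by (rule clin_scale[OF assms(1,3)])
  ultimately show ?thesis using clin_add[OF assms(1,2), of "(-1) *\<^sub>R y"] by simp
qed

lemma clin_0:
  assumes "clinear_on Dm f"
  shows "0 \<in> Dm \<and> f 0 = 0"
proof -
  have z: "0 \<in> Dm" using assms unfolding clinear_on_def csubspace_def by blast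
  show ?thesis using clin_diff[OF assms z z] z by simp
qed


lemma D_props:
  fixes Am :: "'e::complex_banach \<Rightarrow> 'e" and L :: "'e \<Rightarrow> 'f::complex_banach"
  assumes Am_lin: "clinear_on domAm Am"
    and L_lin: "clinear_on domAm L"
    and L_surj: "L ` domAm = UNIV"
    and closed_AmL: "closed {(x, Am x, L x) | x. x \<in> domAm}"
    and A0_inv: "bij_betw Am {x\<in>domAm. L x = 0} UNIV"
  defines "D \<equiv> inv_into {x\<in>domAm. Am x = 0} L"
  shows "\<And>f. D f \<in> domAm \<and> Am (D f) = 0 \<and> L (D f) = f" and "bounded_linear D"
proof -
  let ?Z = "{x\<in>domAm. L x = 0}" and ?K = "{x\<in>domAm. Am x = 0}"
  define R where "R = inv_into ?Z Am"
  have RZ: "R w \<in> domAm \<and> L (R w) = 0" for w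
    using bij_betw_inv_into[OF A0_inv] unfolding R_def bij_betw_def by auto
  have AmR: "Am (R w) = w" for w
    unfolding R_def by (rule bij_betw_inv_into_right[OF A0_inv]) simp
  have Z0: "0 \<in> domAm" "Am 0 = 0" "L 0 = 0" using clin_0[OF Am_lin] clin_0[OF L_lin] by auto
  have surjK: "f \<in> L ` ?K" for f
  proof -
    have "f \<in> L ` domAm" using L_surj by simp
    then obtain x where x: "x \<in> domAm" "L x = f" by blast
    have r1: "R (Am x) \<in> domAm" "L (R (Am x)) = 0" using RZ by auto
    have c1: "x - R (Am x) \<in> domAm \<and> Am (x - R (Am x)) = Am x - Am (R (Am x))"
      by (rule clin_diff[OF Am_lin x(1) r1(1)])
    have c2: "x - R (Am x) \<in> domAm \<and> L (x - R (Am x)) = L x - L (R (Am x))"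
      by (rule clin_diff[OF L_lin x(1) r1(1)])
    have "x - R (Am x) \<in> domAm" "Am (x - R (Am x)) = 0" "L (x - R (Am x)) = f"
      using c1 c2 r1 x by (simp_all add: AmR)
    then show ?thesis by (intro image_eqI[of _ _ "x - R (Am x)"]) auto
  qed
  have Dk: "D f \<in> domAm \<and> Am (D f) = 0 \<and> L (D f) = f" for f
  proof -
    have "D f \<in> ?K" unfolding D_def by (rule inv_into_into[OF surjK])
    moreover have "L (D f) = f" unfolding D_def by (rule f_inv_into_f[OF surjK])
    ultimately show ?thesis by simp
  qed
  show "\<And>f. D f \<in> domAm \<and> Am (D f) = 0 \<and> L (D f) = f" by (rule Dk)
  have uniq0: "x = 0" if "x \<in> domAm" "Am x = 0" "L x = 0" for x
  proof -
    have i: "inj_on Am ?Z" using A0_inv by (simp add: bij_betw_def)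
    have x1: "x \<in> ?Z" and x2: "0 \<in> ?Z" using that Z0 by auto
    have x3: "Am x = Am 0" using that Z0 by simp
    show ?thesis by (rule inj_onD[OF i x3 x1 x2])
  qed
  have uniq: "x = D f" if "x \<in> domAm" "Am x = 0" "L x = f" for x f
  proof -
    have d: "D f \<in> domAm" "Am (D f) = 0" "L (D f) = f" using Dk[of f] by auto
    have c1: "x - D f \<in> domAm \<and> Am (x - D f) = Am x - Am (D f)"
      by (rule clin_diff[OF Am_lin that(1) d(1)])
    have c2: "x - D f \<in> domAm \<and> L (x - D f) = L x - L (D f)"
      by (rule clin_diff[OF L_lin that(1) d(1)])
    have "x - D f = 0"
      by (rule uniq0) (use c1 c2 d that in simp_all)
    then show ?thesis by simp
  qed
  have lin: "linear D"
  proof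
    fix f g
    show "D (f + g) = D f + D g"
      by (rule uniq[symmetric]) (use clin_add[OF Am_lin, of "D f" "D g"] clin_add[OF L_lin, of "D f" "D g"] Dk[of f] Dk[of g] in auto)
  next
    fix r f
    show "D (r *\<^sub>R f) = r *\<^sub>R D f"
      by (rule uniq[symmetric]) (use clin_scale[OF Am_lin, of "D f" r] clin_scale[OF L_lin, of "D f" r] Dk[of f] in auto)
  qed
  show "bounded_linear D"
  proof (rule closed_graph[OF lin])
    fix xs f y assume xs: "xs \<longlonglongrightarrow> f" and Dxs: "(\<lambda>n. D (xs n)) \<longlonglongrightarrow> y"
    let ?G = "{(x, Am x, L x) | x. x \<in> domAm}"
    have tl: "(\<lambda>n. (D (xs n), Am (D (xs n)), L (D (xs n)))) \<longlonglongrightarrow> (y, 0, f)"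
      using Dk xs Dxs by (simp add: tendsto_Pair)
    have mem: "(D (xs n), Am (D (xs n)), L (D (xs n))) \<in> ?G" for n
    proof -
      have "D (xs n) \<in> domAm" using Dk by simp
      then show ?thesis by auto
    qed
    have "(y, 0, f) \<in> ?G"
      by (rule closed_sequentially[OF closed_AmL, of "\<lambda>n. (D (xs n), Am (D (xs n)), L (D (xs n)))"]) (use mem tl in auto)
    then obtain x where "x \<in> domAm" "y = x" "0 = Am x" "f = L x" by blast
    then have "y \<in> domAm" "Am y = 0" "L y = f" by auto
    then show "D f = y" using uniq[of y f] by simp
  qed
qed


theorem lemma4p4:
  fixes Am :: "'e::complex_banach \<Rightarrow> 'e" and domAm :: "'e set"
    and B :: "'f::complex_banach \<Rightarrow> 'f" and domB :: "'f set"
    and L :: "'e \<Rightarrow> 'f"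
    and T0 :: "real \<Rightarrow> 'e \<Rightarrow> 'e" and S :: "real \<Rightarrow> 'f \<Rightarrow> 'f"
  assumes Am_lin: "clinear_on domAm Am"
    and B_lin: "clinear_on domB B"
    and L_lin: "clinear_on domAm L"
    and L_surj: "L ` domAm = UNIV"
    and L_bdd: "\<exists>K. \<forall>x\<in>domAm. norm (L x) \<le> K * (norm x + norm (Am x))"
    and A0_gen: "generates Am {x\<in>domAm. L x = 0} T0"
    and T0_ana: "bounded_analytic_semigroup T0"
    and B_gen: "generates B domB S"
    and closed_AmL: "closed {(x, Am x, L x) | x. x \<in> domAm}"
    and A0_inv: "bij_betw Am {x\<in>domAm. L x = 0} UNIV"
    and A0_inv_bdd: "bounded_linear (inv_into {x\<in>domAm. L x = 0} Am)"
    and B_inv: "bij_betw B domB UNIV"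
    and B_inv_bdd: "bounded_linear (inv_into domB B)"
    and Q_ext: "\<exists>Q :: real \<Rightarrow> 'f \<Rightarrow> 'e.
        (\<forall>t\<ge>0. bounded_clinear (Q t) \<and>
           (\<forall>y\<in>domB. Q t y = inv_into {x\<in>domAm. Am x = 0} L (S t y)
                 - T0 t (inv_into {x\<in>domAm. Am x = 0} L y)
                 - integral {0..t} (\<lambda>s. T0 (t - s) (inv_into {x\<in>domAm. Am x = 0} L (S s (B y))))))
      \<and> (\<exists>M \<epsilon>. \<epsilon> > 0 \<and> (\<forall>t\<in>{0<..<\<epsilon>}. onorm (Q t) \<le> M))"
  shows "\<forall>tmax>0. \<exists>C\<ge>0. \<forall>h\<in>{0..tmax}. \<forall>s0\<in>{0..h}. \<forall>s1\<in>{0..h}. \<forall>y.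
           y \<in> domB \<and> B y \<in> domB \<longrightarrow>
           norm (integral {0..h} (\<lambda>s. T0 (h - s) (inv_into {x\<in>domAm. L x = 0} Am
                    (inv_into {x\<in>domAm. Am x = 0} L (S s (B y)))))
                 - h *\<^sub>R T0 (h - s0) (inv_into {x\<in>domAm. L x = 0} Am
                    (inv_into {x\<in>domAm. Am x = 0} L (S s1 (B y)))))
           \<le> C * h\<^sup>2 * (norm (B y) + norm (B (B y)))"
proof (intro allI impI)
  fix tmax :: real assume tmax: "tmax > 0"
  define R where "R = inv_into {x\<in>domAm. L x = 0} Am"
  define D where "D = inv_into {x\<in>domAm. Am x = 0} L"
  have Dk: "\<And>f. D f \<in> domAm \<and> Am (D f) = 0 \<and> L (D f) = f" and Dbl: "bounded_linear D"
    using D_props[OF Am_lin L_lin L_surj closed_AmL A0_inv] unfolding D_def by auto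
  have Rbl: "bounded_linear R" using A0_inv_bdd unfolding R_def .
  have RZ: "R w \<in> {x\<in>domAm. L x = 0}" for w
    using bij_betw_inv_into[OF A0_inv] unfolding R_def bij_betw_def by auto
  have AmR: "Am (R w) = w" for w
    unfolding R_def by (rule bij_betw_inv_into_right[OF A0_inv]) simp
  obtain cD where cD: "cD > 0" "\<And>x. norm (D x) \<le> norm x * cD"
    using bounded_linear.pos_bounded[OF Dbl] by blast
  obtain cR where cR: "cR > 0" "\<And>x. norm (R x) \<le> norm x * cR"
    using bounded_linear.pos_bounded[OF Rbl] by blast
  have C0T: "C0_semigroup T0" using A0_gen unfolding generates_def by blast
  have C0S: "C0_semigroup S" using B_gen unfolding generates_def by blast
  obtain M0 where M0: "M0 > 0" "\<And>t x. t \<in> {0..tmax} \<Longrightarrow> norm (T0 t x) \<le> M0 * norm x"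
    using sg_bound[OF C0T, of tmax] by blast
  obtain MS where MS: "MS > 0" "\<And>t x. t \<in> {0..tmax} \<Longrightarrow> norm (S t x) \<le> MS * norm x"
    using sg_bound[OF C0S, of tmax] by blast
  have blT: "bounded_linear (T0 t)" if "t \<ge> 0" for t
    using C0T that unfolding C0_semigroup_def by (auto intro: bclin_bl)
  define C where "C = M0 * cR * cD * MS + M0 * cD * MS"
  have C0: "C \<ge> 0" using M0 cR cD MS by (simp add: C_def)
  show "\<exists>C\<ge>0. \<forall>h\<in>{0..tmax}. \<forall>s0\<in>{0..h}. \<forall>s1\<in>{0..h}. \<forall>y.
           y \<in> domB \<and> B y \<in> domB \<longrightarrow>
           norm (integral {0..h} (\<lambda>s. T0 (h - s) (inv_into {x\<in>domAm. L x = 0} Am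
                    (inv_into {x\<in>domAm. Am x = 0} L (S s (B y)))))
                 - h *\<^sub>R T0 (h - s0) (inv_into {x\<in>domAm. L x = 0} Am
                    (inv_into {x\<in>domAm. Am x = 0} L (S s1 (B y)))))
           \<le> C * h\<^sup>2 * (norm (B y) + norm (B (B y)))"
    unfolding R_def[symmetric] D_def[symmetric]
  proof (intro exI[of _ C] conjI C0 ballI allI impI)
    fix h s0 s1 y assume h: "h \<in> {0..tmax}" and s0: "s0 \<in> {0..h}" and s1: "s1 \<in> {0..h}"
      and y: "y \<in> domB \<and> B y \<in> domB"
    define z where "z = B y"
    have z: "z \<in> domB" using y by (simp add: z_def)
    define v where "v s = R (D (S s z))" for s
    define c where "c = T0 (h - s0) (v s1)"
    have hsub: "{0..h} \<subseteq> {0..tmax}" using h by auto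
    have "continuous_on {0..} (\<lambda>s. S s z)" using C0S unfolding C0_semigroup_def by blast
    then have "continuous_on {0..h} (\<lambda>s. S s z)" by (rule continuous_on_subset) auto
    then have "continuous_on {0..h} (\<lambda>s. D (S s z))" by (rule bounded_linear.continuous_on[OF Dbl])
    then have vc: "continuous_on {0..h} v" unfolding v_def by (rule bounded_linear.continuous_on[OF Rbl])
    have M0h: "norm (T0 t x) \<le> M0 * norm x" if "t \<in> {0..h}" for t x
      using M0(2)[of t x] that hsub by auto
    have phic: "continuous_on {0..h} (\<lambda>s. T0 (h - s) (v s))"
      by (rule sg_cont_comp[OF C0T M0h vc])
    have dc: "continuous_on {0..h} (\<lambda>s. T0 (h - s) (v s) - c)"
      by (intro continuous_on_diff phic continuous_on_const)
    have int1: "(\<lambda>s. T0 (h - s) (v s)) integrable_on {0..h}"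
      by (rule integrable_continuous_real[OF phic])
    have int2: "(\<lambda>s. c) integrable_on {0..h}" by (rule integrable_const_ivl)
    have h0: "h \<ge> 0" using h by simp
    have ieq: "integral {0..h} (\<lambda>s. T0 (h - s) (v s) - c) = integral {0..h} (\<lambda>s. T0 (h - s) (v s)) - h *\<^sub>R c"
      using integral_diff[OF int1 int2] h0 by simp
    have pw: "norm (T0 (h - s) (v s) - c) \<le> C * h * (norm z + norm (B z))" if s: "s \<in> {0..h}" for s
    proof -
      have hs: "h - s \<in> {0..tmax}" "h - s0 \<in> {0..tmax}" using s s0 h by auto
      have spl: "T0 (h - s) (v s) - c = T0 (h - s) (v s - v s1) + (T0 (h - s) (v s1) - T0 (h - s0) (v s1))"
        using blT[of "h - s"] hs unfolding c_def by (simp add: linear_simps)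
      have vd: "v s - v s1 = R (D (S s z - S s1 z))"
        unfolding v_def using Rbl Dbl by (simp add: linear_simps)
      have sS: "s \<in> {0..tmax}" "s1 \<in> {0..tmax}" using s s1 hsub by auto
      have lipS: "norm (S s z - S s1 z) \<le> MS * norm (B z) * \<bar>s - s1\<bar>"
        by (rule gen_lip[OF B_gen MS(2) less_imp_le[OF MS(1)] z sS])
      have "\<bar>s - s1\<bar> \<le> h" using s s1 by auto
      then have lipS': "norm (S s z - S s1 z) \<le> MS * norm (B z) * h"
        using lipS MS(1) by (meson mult_left_mono norm_ge_zero order_trans zero_le_mult_iff less_imp_le)
      have n1: "norm (T0 (h - s) (v s - v s1)) \<le> M0 * cR * cD * MS * norm (B z) * h"
      proof -
        have "norm (T0 (h - s) (v s - v s1)) \<le> M0 * norm (v s - v s1)" using M0(2)[OF hs(1)] .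
        also have "norm (v s - v s1) \<le> norm (D (S s z - S s1 z)) * cR" unfolding vd by (rule cR(2))
        also have "norm (D (S s z - S s1 z)) \<le> norm (S s z - S s1 z) * cD" by (rule cD(2))
        also have "norm (S s z - S s1 z) \<le> MS * norm (B z) * h" by (rule lipS')
        finally show ?thesis using M0(1) cR(1) cD(1) by (simp add: mult_left_mono mult_right_mono algebra_simps)
      qed
      define u where "u = D (S s1 z)"
      have Ru: "R u \<in> {x\<in>domAm. L x = 0}" by (rule RZ)
      have lipT: "norm (T0 (h - s) (R u) - T0 (h - s0) (R u)) \<le> M0 * norm (Am (R u)) * \<bar>(h - s) - (h - s0)\<bar>"
        by (rule gen_lip[OF A0_gen M0(2) less_imp_le[OF M0(1)] Ru hs])
      have "\<bar>(h - s) - (h - s0)\<bar> \<le> h" using s s0 by auto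
      moreover have "norm u \<le> cD * MS * norm z"
      proof -
        have "norm u \<le> norm (S s1 z) * cD" unfolding u_def by (rule cD(2))
        also have "norm (S s1 z) \<le> MS * norm z" by (rule MS(2)[OF sS(2)])
        finally show ?thesis using cD(1) by (simp add: mult_right_mono algebra_simps)
      qed
      ultimately have n2: "norm (T0 (h - s) (v s1) - T0 (h - s0) (v s1)) \<le> M0 * cD * MS * norm z * h"
        using lipT M0(1) unfolding v_def u_def[symmetric] AmR
        by (smt (verit, ccfv_SIG) mult.assoc mult.commute mult_left_mono mult_mono norm_ge_zero)
      have "norm (T0 (h - s) (v s) - c) \<le> norm (T0 (h - s) (v s - v s1)) + norm (T0 (h - s) (v s1) - T0 (h - s0) (v s1))"
        unfolding spl by (rule norm_triangle_ineq)
      also have "\<dots> \<le> M0 * cR * cD * MS * norm (B z) * h + M0 * cD * MS * norm z * h"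
        using n1 n2 by (rule add_mono)
      also have "\<dots> \<le> C * h * (norm z + norm (B z))"
      proof -
        have a: "M0 * cR * cD * MS * norm (B z) * h \<le> C * h * norm (B z)"
          unfolding C_def using M0(1) cR(1) cD(1) MS(1) h0
          by (simp add: algebra_simps mult_nonneg_nonneg)
        have b: "M0 * cD * MS * norm z * h \<le> C * h * norm z"
          unfolding C_def using M0(1) cR(1) cD(1) MS(1) h0
          by (simp add: algebra_simps mult_nonneg_nonneg)
        show ?thesis using add_mono[OF a b] by (simp add: algebra_simps)
      qed
      finally show ?thesis .
    qed
    have "norm (integral {0..h} (\<lambda>s. T0 (h - s) (v s) - c)) \<le> (C * h * (norm z + norm (B z))) * (h - 0)"
      by (rule integral_bound[OF h0 dc pw])
    then show "norm (integral {0..h} (\<lambda>s. T0 (h - s) (R (D (S s (B y))))) - h *\<^sub>R T0 (h - s0) (R (D (S s1 (B y)))))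
           \<le> C * h\<^sup>2 * (norm (B y) + norm (B (B y)))"
      unfolding ieq by (simp add: v_def c_def z_def power2_eq_square algebra_simps)
  qed
qed

end
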